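(* Let $G$ be a finite simple undirected graph and let $A, B, C$ be $\omega(G)$-cliques of $G$ that are pairwise adjacent in $\mathsf{TJ}_{\omega(G)}(G)$. Then $A \cap B = B \cap C = A \cap C$.
   Context: $\omega(G)$ is the maximum size of a clique (set of pairwise adjacent vertices) of $G$. For an integer $k$, $\mathsf{TJ}_k(G)$ (token jumping graph) is the graph whose vertices are the cliques of $G$ of size $k$, two such cliques $C, C'$ being adjacent iff $|C \setminus C'| = |C' \setminus C| = 1$. *)

theory Defs
  imports Main
begin

definition simple_graph :: "'a set \<Rightarrow> ('a \<Rightarrow> 'a \<Rightarrow> bool) \<Rightarrow> bool" where
  "simple_graph V E \<longleftrightarrow> finite V \<and> (\<forall>x y. E x y \<longrightarrow> x \<in> V \<and> y \<in> V)
     \<and> (\<forall>x. \<not> E x x) \<and> (\<forall>x y. E x y \<longrightarrow> E y x)"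

definition is_clique :: "'a set \<Rightarrow> ('a \<Rightarrow> 'a \<Rightarrow> bool) \<Rightarrow> 'a set \<Rightarrow> bool" where
  "is_clique V E K \<longleftrightarrow> K \<subseteq> V \<and> (\<forall>x\<in>K. \<forall>y\<in>K. x \<noteq> y \<longrightarrow> E x y)"

definition clique_number :: "'a set \<Rightarrow> ('a \<Rightarrow> 'a \<Rightarrow> bool) \<Rightarrow> nat" where
  "clique_number V E = Max (card ` {K. is_clique V E K})"

text \<open>Vertices of TJ_k(G): cliques of size k.\<close>
definition k_cliques :: "'a set \<Rightarrow> ('a \<Rightarrow> 'a \<Rightarrow> bool) \<Rightarrow> nat \<Rightarrow> 'a set set" where
  "k_cliques V E k = {K. is_clique V E K \<and> card K = k}"

definition TJ_adj :: "'a set \<Rightarrow> 'a set \<Rightarrow> bool" where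
  "TJ_adj C C' \<longleftrightarrow> card (C - C') = 1 \<and> card (C' - C) = 1"

end

theory Submission
  imports Defs
begin

lemma card_int_eq:
  assumes "finite X" "card (X - Y) = 1"
  shows "card (X \<inter> Y) + 1 = card X"
proof -
  have "X = (X \<inter> Y) \<union> (X - Y)" by blast
  hence "card X = card (X \<inter> Y) + card (X - Y)"
    using assms(1) by (metis card_Un_disjoint Diff_Int_distrib Int_Diff_disjoint finite_Diff finite_Int)
  thus ?thesis using assms by simp
qed

theorem lemma4p2:
  fixes V :: "'a set" and E :: "'a \<Rightarrow> 'a \<Rightarrow> bool" and A B C :: "'a set"
  assumes "simple_graph V E"
    and "A \<in> k_cliques V E (clique_number V E)"
    and "B \<in> k_cliques V E (clique_number V E)"
    and "C \<in> k_cliques V E (clique_number V E)"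
    and "TJ_adj A B" and "TJ_adj B C" and "TJ_adj A C"
  shows "A \<inter> B = B \<inter> C \<and> B \<inter> C = A \<inter> C"
proof -
  define k where "k = clique_number V E"
  have fV: "finite V" using assms(1) unfolding simple_graph_def by blast
  have cA: "is_clique V E A" "card A = k" using assms(2) unfolding k_def k_cliques_def by auto
  have cB: "is_clique V E B" "card B = k" using assms(3) unfolding k_def k_cliques_def by auto
  have cC: "is_clique V E C" "card C = k" using assms(4) unfolding k_def k_cliques_def by auto
  have fA: "finite A" using cA fV unfolding is_clique_def using finite_subset by blast
  have fB: "finite B" using cB fV unfolding is_clique_def using finite_subset by blast
  have fC: "finite C" using cC fV unfolding is_clique_def using finite_subset by blast
  have fin: "finite (card ` {K. is_clique V E K})"
  proof -
    have "{K. is_clique V E K} \<subseteq> Pow V" unfolding is_clique_def by blast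
    hence "finite {K. is_clique V E K}" using fV by (meson finite_Pow_iff finite_subset)
    thus ?thesis by simp
  qed
  have maxle: "card K \<le> k" if "is_clique V E K" for K
    unfolding k_def clique_number_def using fin that by (simp add: Max_ge)
  have AB: "card (A - B) = 1" "card (B - A) = 1" using assms(5) unfolding TJ_adj_def by auto
  have BC: "card (B - C) = 1" "card (C - B) = 1" using assms(6) unfolding TJ_adj_def by auto
  have AC: "card (A - C) = 1" "card (C - A) = 1" using assms(7) unfolding TJ_adj_def by auto
  obtain a where a: "A - B = {a}" using AB(1) card_1_singletonE by blast
  obtain b where b: "B - A = {b}" using AB(2) card_1_singletonE by blast
  have sub: "A \<inter> B \<subseteq> C"
  proof
    fix s assume s: "s \<in> A \<inter> B"
    show "s \<in> C"
    proof (rule ccontr)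
      assume sC: "s \<notin> C"
      obtain x where x: "A - C = {x}" using AC(1) card_1_singletonE by blast
      obtain y where y: "B - C = {y}" using BC(1) card_1_singletonE by blast
      have "x = s" "y = s" using x y s sC by auto
      hence aC: "a \<in> C" and bC: "b \<in> C" using a b x y s by auto
      have ab: "a \<noteq> b" using a b by auto
      have Eab: "E b a" using cC(1) aC bC ab unfolding is_clique_def by auto
      have K: "is_clique V E (insert b A)"
        unfolding is_clique_def
      proof (intro conjI ballI impI)
        show "insert b A \<subseteq> V" using cA(1) cB(1) b unfolding is_clique_def by blast
      next
        fix u v assume u: "u \<in> insert b A" and v: "v \<in> insert b A" and uv: "u \<noteq> v"
        have sym: "\<And>p q. E p q \<Longrightarrow> E q p" using assms(1) unfolding simple_graph_def by blast
        have EbA: "E b w" if "w \<in> A" "w \<noteq> b" for w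
        proof (cases "w = a")
          case True thus ?thesis using Eab by simp
        next
          case False
          hence "w \<in> B" using that a by blast
          moreover have "b \<in> B" using b by blast
          ultimately show ?thesis using cB(1) that(2) unfolding is_clique_def by auto
        qed
        have EA: "\<And>p q. p \<in> A \<Longrightarrow> q \<in> A \<Longrightarrow> p \<noteq> q \<Longrightarrow> E p q"
          using cA(1) unfolding is_clique_def by blast
        show "E u v"
        proof (cases "u = b")
          case True thus ?thesis using v uv EbA by auto
        next
          case False
          hence uA: "u \<in> A" using u by auto
          show ?thesis
          proof (cases "v = b")
            case True thus ?thesis using uA uv EbA sym by metis
          next
            case False thus ?thesis using v uA uv EA by auto
          qed
        qed
      qed
      have "b \<notin> A" using b by blast
      hence "card (insert b A) = k + 1" using fA cA(2) by simp
      thus False using maxle[OF K] by simp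
    qed
  qed
  have e1: "card (A \<inter> B) + 1 = k" using card_int_eq[OF fA AB(1)] cA by simp
  have e2: "card (A \<inter> C) + 1 = k" using card_int_eq[OF fA AC(1)] cA by simp
  have e3: "card (B \<inter> C) + 1 = k" using card_int_eq[OF fB BC(1)] cB by simp
  have "A \<inter> B = A \<inter> C"
    using card_subset_eq[of "A \<inter> C" "A \<inter> B"] sub e1 e2 fA by auto
  moreover have "A \<inter> B = B \<inter> C"
    using card_subset_eq[of "B \<inter> C" "A \<inter> B"] sub e1 e3 fB by auto
  ultimately show ?thesis by simp
qed

end
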